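(* In the setting described in the context, let $p$ be a facet of $\Delta_\lambda$ of $\mathbf a$-degree at least $1$, with its nodes labelled $1,\dots,k-1$ so that $p$ is identified with the simplex on $[k-1]$. If $[k-1]\setminus\{i,i+1\}$ is a facet of $F_{<p}\cap p$, then neither $[k-1]\setminus\{i+1,i+2\}$ nor $[k-1]\setminus\{i+2,i+3\}$ is a facet of $F_{<p}\cap p$.
   Context: Let $n,d\ge2$, $V(n,d)=\{\mathbf b\in\mathbb N^n:\sum_i b_i=d\}$, and let $\mathbf a\in V(n,d)$ satisfy $a_1\le\dots\le a_n$ and $\mathbf a\notin\{(0,\dots,0,d),(0,\dots,0,1,d-1),(0,\dots,0,2,d-2)\}$. Let $\Gamma=V(n,d)\setminus\{\mathbf a\}$ and assume $\Gamma+\Gamma=V(n,2d)$. Order $V(n,d)$ lexicographically ($b<c$ iff the first nonzero coordinate of $c-b$ is positive). Let $\lambda$ be in the semigroup generated by $\Gamma$, $k=|\lambda|=(\sum_i\lambda_i)/d$. A closed chain from $0$ to $\lambda$ is a sequence $0=v_0,v_1,\dots,v_k=\lambda$ in $\mathbb N^n$ with all links $v_j-v_{j-1}\in V(n,d)$; its $\mathbf a$-degree is the number of links equal to $\mathbf a$; its open chain is $\{v_1,\dots,v_{k-1}\}$, with $v_j$ labelled $j$. $\Delta_\lambda$ is the simplicial complex whose facets are all these open chains. Facets are ordered: $q<p$ iff $\mathbf a$-degree of $q$ is smaller than that of $p$, or equal and the link sequence of $q$ is lexicographically smaller than that of $p$ (first links compared first, using the order on $V(n,d)$). $F_{<p}$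 is the subcomplex of $\Delta_\lambda$ generated by the facets $q<p$; $p$ also denotes the full simplex on its nodes. *)

theory Defs
  imports Main
begin

text \<open>Vectors in N^n are functions nat => nat vanishing outside the index range 0..n-1
  (coordinate i of the paper is index i-1 here).\<close>

definition vec :: "nat \<Rightarrow> (nat \<Rightarrow> nat) \<Rightarrow> bool" where
  "vec n b \<longleftrightarrow> (\<forall>i\<ge>n. b i = 0)"

definition V :: "nat \<Rightarrow> nat \<Rightarrow> (nat \<Rightarrow> nat) set" where
  "V n d = {b. vec n b \<and> (\<Sum>i<n. b i) = d}"

definition vadd :: "(nat \<Rightarrow> nat) \<Rightarrow> (nat \<Rightarrow> nat) \<Rightarrow> (nat \<Rightarrow> nat)" where
  "vadd b c = (\<lambda>i. b i + c i)"

definition sumset :: "(nat \<Rightarrow> nat) set \<Rightarrow> (nat \<Rightarrow> nat) set \<Rightarrow> (nat \<Rightarrow> nat) set" where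
  "sumset A B = {vadd b c | b c. b \<in> A \<and> c \<in> B}"

inductive_set gen_semigroup :: "(nat \<Rightarrow> nat) set \<Rightarrow> (nat \<Rightarrow> nat) set" for G where
  zero: "(\<lambda>_. 0) \<in> gen_semigroup G"
| add: "s \<in> gen_semigroup G \<Longrightarrow> g \<in> G \<Longrightarrow> vadd s g \<in> gen_semigroup G"

definition lexless :: "nat \<Rightarrow> (nat \<Rightarrow> nat) \<Rightarrow> (nat \<Rightarrow> nat) \<Rightarrow> bool" where
  "lexless n b c \<longleftrightarrow> (\<exists>j<n. (\<forall>i<j. b i = c i) \<and> b j < c j)"

text \<open>Closed chains from 0 to lam, represented by their link sequences.\<close>
definition node :: "(nat \<Rightarrow> nat) list \<Rightarrow> nat \<Rightarrow> (nat \<Rightarrow> nat)" where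
  "node ls j = (\<lambda>t. \<Sum>m<j. (ls ! m) t)"

definition chains :: "nat \<Rightarrow> nat \<Rightarrow> (nat \<Rightarrow> nat) \<Rightarrow> (nat \<Rightarrow> nat) list set" where
  "chains n d lam = {ls. set ls \<subseteq> V n d \<and> node ls (length ls) = lam}"

definition open_chain :: "(nat \<Rightarrow> nat) list \<Rightarrow> (nat \<Rightarrow> nat) set" where
  "open_chain ls = node ls ` {1..<length ls}"

definition adeg :: "(nat \<Rightarrow> nat) \<Rightarrow> (nat \<Rightarrow> nat) list \<Rightarrow> nat" where
  "adeg a ls = length (filter (\<lambda>l. l = a) ls)"

definition seqless :: "nat \<Rightarrow> (nat \<Rightarrow> nat) list \<Rightarrow> (nat \<Rightarrow> nat) list \<Rightarrow> bool" where
  "seqless n ls ms \<longleftrightarrow>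
     (\<exists>j<min (length ls) (length ms). (\<forall>m<j. ls ! m = ms ! m) \<and> lexless n (ls ! j) (ms ! j))"

definition facet_less :: "nat \<Rightarrow> (nat \<Rightarrow> nat) \<Rightarrow> (nat \<Rightarrow> nat) list \<Rightarrow> (nat \<Rightarrow> nat) list \<Rightarrow> bool" where
  "facet_less n a q p \<longleftrightarrow> adeg a q < adeg a p \<or> (adeg a q = adeg a p \<and> seqless n q p)"

definition F_less :: "nat \<Rightarrow> nat \<Rightarrow> (nat \<Rightarrow> nat) \<Rightarrow> (nat \<Rightarrow> nat) \<Rightarrow> (nat \<Rightarrow> nat) list
    \<Rightarrow> (nat \<Rightarrow> nat) set set" where
  "F_less n d a lam p = {\<sigma>. \<exists>q \<in> chains n d lam. facet_less n a q p \<and> \<sigma> \<subseteq> open_chain q}"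

text \<open>F_{<p} \<inter> p, where p is the full simplex on its nodes.\<close>
definition F_less_cap :: "nat \<Rightarrow> nat \<Rightarrow> (nat \<Rightarrow> nat) \<Rightarrow> (nat \<Rightarrow> nat) \<Rightarrow> (nat \<Rightarrow> nat) list
    \<Rightarrow> (nat \<Rightarrow> nat) set set" where
  "F_less_cap n d a lam p = F_less n d a lam p \<inter> Pow (open_chain p)"

definition is_facet :: "'x set set \<Rightarrow> 'x set \<Rightarrow> bool" where
  "is_facet K \<sigma> \<longleftrightarrow> \<sigma> \<in> K \<and> (\<forall>\<tau>\<in>K. \<sigma> \<subseteq> \<tau> \<longrightarrow> \<tau> = \<sigma>)"

text \<open>The face of p labelled by S (node v_j has label j).\<close>
definition labelled_face :: "(nat \<Rightarrow> nat) list \<Rightarrow> nat set \<Rightarrow> (nat \<Rightarrow> nat) set" where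
  "labelled_face p S = node p ` S"

end

theory Submission
  imports Defs
begin

section \<open>Lexicographic order basics\<close>

lemma lex_irrefl: "\<not> lexless n b b"
  by (auto simp: lexless_def)

lemma lex_trans:
  assumes "lexless n x y" "lexless n y z" shows "lexless n x z"
proof -
  obtain j1 where j1: "j1 < n" "\<forall>i<j1. x i = y i" "x j1 < y j1"
    using assms(1) by (auto simp: lexless_def)
  obtain j2 where j2: "j2 < n" "\<forall>i<j2. y i = z i" "y j2 < z j2"
    using assms(2) by (auto simp: lexless_def)
  show ?thesis
  proof (cases "j1 < j2")
    case True
    then show ?thesis using j1 j2 unfolding lexless_def
      by (intro exI[of _ j1]) auto
  next
    case False
    show ?thesis
    proof (cases "j1 = j2")
      case True
      then show ?thesis using j1 j2 unfolding lexless_def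
        by (intro exI[of _ j1]) auto
    next
      case False
      then have "j2 < j1" using \<open>\<not> j1 < j2\<close> by simp
      then show ?thesis using j1 j2 unfolding lexless_def
        by (intro exI[of _ j2]) auto
    qed
  qed
qed

lemma lex_asym: "lexless n x y \<Longrightarrow> \<not> lexless n y x"
  using lex_trans lex_irrefl by blast

lemma lex_total:
  assumes "vec n x" "vec n y" "x \<noteq> y"
  shows "lexless n x y \<or> lexless n y x"
proof -
  obtain i where "x i \<noteq> y i" using assms(3) by auto
  define j where "j = (LEAST i. x i \<noteq> y i)"
  have jd: "x j \<noteq> y j" using \<open>x i \<noteq> y i\<close> unfolding j_def by (rule LeastI)
  have jb: "\<forall>k<j. x k = y k" unfolding j_def using not_less_Least by blast
  have "j < n"
  proof (rule ccontr)
    assume "\<not> j < n"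
    then show False using assms(1,2) jd by (auto simp: vec_def)
  qed
  show ?thesis
  proof (cases "x j < y j")
    case True then show ?thesis using jb \<open>j < n\<close> by (auto simp: lexless_def)
  next
    case False then have "y j < x j" using jd by simp
    then show ?thesis using jb \<open>j < n\<close> unfolding lexless_def
      by (intro disjI2 exI[of _ j]) auto
  qed
qed

lemma lex_min_exists:
  assumes "finite A" "A \<noteq> {}"
  shows "\<exists>m\<in>A. \<forall>b\<in>A. \<not> lexless n b m"
  using assms
proof (induction A rule: finite_ne_induct)
  case (singleton x) then show ?case by (auto simp: lex_irrefl)
next
  case (insert x F)
  then obtain m where m: "m \<in> F" "\<forall>b\<in>F. \<not> lexless n b m" by blast
  show ?case
  proof (cases "lexless n x m")
    case True
    then show ?thesis using m lex_trans lex_irrefl by (intro bexI[of _ x]) blast+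
  next
    case False
    then show ?thesis using m by (intro bexI[of _ m]) auto
  qed
qed

lemma deg_tail:
  assumes "vec n b" "vec n c" "sum b {..<n} = sum c {..<n}"
    "j < n" "\<forall>i<j. b i = c i" "b j < c j"
  shows "\<exists>t. j < t \<and> t < n \<and> c t < b t"
proof (rule ccontr)
  assume "\<not> ?thesis"
  then have le: "\<forall>t\<in>{..<n}. b t \<le> c t"
    using assms(5,6) by (metis le_eq_less_or_eq lessThan_iff linorder_neqE_nat not_le)
  have "sum b {..<n} < sum c {..<n}"
    by (rule sum_strict_mono_ex1) (use le assms(4,6) in auto)
  then show False using assms(3) by simp
qed

definition mv :: "(nat \<Rightarrow> nat) \<Rightarrow> nat \<Rightarrow> nat \<Rightarrow> nat \<Rightarrow> nat" where
  "mv x u t = x(u := x u - 1, t := Suc (x t))"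

lemma sum_two:
  fixes f :: "nat \<Rightarrow> nat"
  assumes "u \<noteq> t" "u < n" "t < n"
  shows "sum f {..<n} = f u + f t + sum f ({..<n} - {u} - {t})"
proof -
  have "sum f {..<n} = f u + sum f ({..<n} - {u})"
    using assms by (subst sum.remove[of _ u]) auto
  also have "sum f ({..<n} - {u}) = f t + sum f ({..<n} - {u} - {t})"
    using assms by (subst sum.remove[of _ t]) auto
  finally show ?thesis by simp
qed

lemma sum_mv:
  assumes "u \<noteq> t" "u < n" "t < n" "1 \<le> x u"
  shows "sum (mv x u t) {..<n} = sum x {..<n}"
proof -
  have "sum (mv x u t) ({..<n} - {u} - {t}) = sum x ({..<n} - {u} - {t})"
    by (rule sum.cong) (auto simp: mv_def)
  then show ?thesis using sum_two[OF assms(1-3), of "mv x u t"] sum_two[OF assms(1-3), of x] assms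
    by (simp add: mv_def)
qed

lemma mv_V:
  assumes "x \<in> V n d" "u \<noteq> t" "u < n" "t < n" "1 \<le> x u"
  shows "mv x u t \<in> V n d"
  using assms sum_mv[of u t n x] by (auto simp: V_def vec_def mv_def)

lemma mv_lex:
  assumes "u < t" "t < n" "1 \<le> x u"
  shows "lexless n (mv x u t) x"
  unfolding lexless_def using assms by (intro exI[of _ u]) (auto simp: mv_def)

section \<open>Sub-vectors, tops\<close>

definition Sv :: "nat \<Rightarrow> nat \<Rightarrow> (nat \<Rightarrow> nat) \<Rightarrow> (nat \<Rightarrow> nat) set" where
  "Sv n d w = {m \<in> V n d. \<forall>i. m i \<le> w i}"

definition TP :: "nat \<Rightarrow> (nat \<Rightarrow> nat) \<Rightarrow> (nat \<Rightarrow> nat) \<Rightarrow> bool" where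
  "TP n \<tau> w \<longleftrightarrow> (\<forall>u t. u < t \<longrightarrow> t < n \<longrightarrow> 0 < \<tau> u \<longrightarrow> w t \<le> \<tau> t)"

lemma finite_Sv: "finite (Sv n d w)"
proof -
  define M where "M = sum w {..<n}"
  have inj: "inj_on (\<lambda>m. map m [0..<n]) (Sv n d w)"
  proof (rule inj_onI)
    fix m m' assume "m \<in> Sv n d w" "m' \<in> Sv n d w" "map m [0..<n] = map m' [0..<n]"
    then have "\<forall>i<n. m i = m' i" "vec n m" "vec n m'"
      by (auto simp: map_eq_conv Sv_def V_def)
    then show "m = m'" by (auto simp: vec_def fun_eq_iff) (metis not_le)
  qed
  have "(\<lambda>m. map m [0..<n]) ` Sv n d w \<subseteq> {xs. set xs \<subseteq> {..M} \<and> length xs = n}"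
  proof clarsimp
    fix m i assume "m \<in> Sv n d w" "i < n"
    then have "m i \<le> w i" by (auto simp: Sv_def)
    also have "w i \<le> M" unfolding M_def using \<open>i < n\<close> by (intro member_le_sum) auto
    finally show "m i \<le> M" .
  qed
  then have "finite ((\<lambda>m. map m [0..<n]) ` Sv n d w)"
    by (rule finite_subset) (rule finite_lists_length_eq, simp)
  then show ?thesis using inj finite_imageD by blast
qed

lemma Sv_vec: "m \<in> Sv n d w \<Longrightarrow> vec n m"
  by (auto simp: Sv_def V_def)

lemma top_exists:
  assumes "x \<in> Sv n d w"
  shows "\<exists>\<tau>\<in>Sv n d w. TP n \<tau> w"
proof -
  obtain \<tau> where t: "\<tau> \<in> Sv n d w" "\<forall>b\<in>Sv n d w. \<not> lexless n b \<tau>"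
    using lex_min_exists[OF finite_Sv, of n d w] assms by blast
  have "TP n \<tau> w"
    unfolding TP_def
  proof (intro allI impI, rule ccontr)
    fix u t assume ut: "u < t" "t < n" "0 < \<tau> u" "\<not> w t \<le> \<tau> t"
    have "mv \<tau> u t \<in> Sv n d w"
      using t(1) ut mv_V[of \<tau> n d u t] by (auto simp: Sv_def mv_def) (metis diff_le_self le_trans)
    moreover have "lexless n (mv \<tau> u t) \<tau>" using ut by (intro mv_lex) auto
    ultimately show False using t(2) by blast
  qed
  then show ?thesis using t by blast
qed

lemma top_min:
  assumes "TP n \<tau> w" "\<tau> \<in> Sv n d w" "m \<in> Sv n d w"
  shows "\<not> lexless n m \<tau>"
proof
  assume "lexless n m \<tau>"
  then obtain j where j: "j < n" "\<forall>i<j. m i = \<tau> i" "m j < \<tau> j" by (auto simp: lexless_def)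
  obtain t where t: "j < t" "t < n" "\<tau> t < m t"
    using deg_tail[of n m \<tau> j] j assms(2,3) by (auto simp: Sv_def V_def)
  have "w t \<le> \<tau> t" using assms(1) j t unfolding TP_def by auto
  moreover have "m t \<le> w t" using assms(3) by (auto simp: Sv_def)
  ultimately show False using t by simp
qed

lemma top_le:
  assumes "TP n \<tau> w" "\<tau> \<in> Sv n d w" "m \<in> Sv n d w"
  shows "m = \<tau> \<or> lexless n \<tau> m"
  using top_min[OF assms] lex_total[of n \<tau> m] Sv_vec assms(2,3) by blast

lemma top_unique:
  assumes "TP n \<tau> w" "\<tau> \<in> Sv n d w" "TP n \<sigma> w" "\<sigma> \<in> Sv n d w"
  shows "\<sigma> = \<tau>"
  using top_le[OF assms(1,2,4)] top_min[OF assms(3,4,2)] by blast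

lemma sum_diff_nat:
  fixes f g :: "nat \<Rightarrow> nat"
  assumes "\<forall>i. g i \<le> f i"
  shows "sum (\<lambda>i. f i - g i) A = sum f A - sum g A"
  by (rule sum_subtractf_nat) (use assms in auto)

lemma bot_max:
  assumes "TP n \<tau> w" "\<tau> \<in> Sv n d w" "m \<in> Sv n d w" "sum w {..<n} = 2 * d" "vec n w"
  shows "\<not> lexless n (\<lambda>i. w i - \<tau> i) m"
proof
  let ?R = "\<lambda>i. w i - \<tau> i"
  assume "lexless n ?R m"
  then obtain j where j: "j < n" "\<forall>i<j. ?R i = m i" "?R j < m j" by (auto simp: lexless_def)
  have le: "\<forall>i. \<tau> i \<le> w i" "\<forall>i. m i \<le> w i" using assms(2,3) by (auto simp: Sv_def)
  have "sum ?R {..<n} = d"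
    using sum_diff_nat[OF le(1), of "{..<n}"] assms(2,4) by (auto simp: Sv_def V_def)
  moreover have "vec n ?R" using assms(5) by (auto simp: vec_def)
  ultimately obtain t where t: "j < t" "t < n" "m t < ?R t"
    using deg_tail[of n ?R m j] j assms(3) by (auto simp: Sv_def V_def)
  have "0 < \<tau> j" using j(3) le(2)[rule_format, of j] by linarith
  then have "w t \<le> \<tau> t" using assms(1) j t unfolding TP_def by auto
  then show False using t by simp
qed

lemma move_exists:
  assumes "m \<in> V n d" "x \<in> V n d" "\<forall>i. m i \<le> x i + w i" "lexless n m x"
  shows "\<exists>u t. u < t \<and> t < n \<and> 1 \<le> x u \<and> 1 \<le> w t"
proof -
  obtain j where j: "j < n" "\<forall>i<j. m i = x i" "m j < x j" using assms(4) by (auto simp: lexless_def)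
  obtain t where t: "j < t" "t < n" "x t < m t"
    using deg_tail[of n m x j] j assms(1,2) by (auto simp: V_def)
  have "1 \<le> w t" using assms(3)[rule_format, of t] t by linarith
  moreover have "1 \<le> x j" using j by linarith
  ultimately show ?thesis using t by blast
qed

lemma sum_le_eq:
  fixes b c :: "nat \<Rightarrow> nat"
  assumes "vec n b" "vec n c" "\<forall>i<n. b i \<le> c i" "sum b {..<n} = sum c {..<n}"
  shows "b = c"
proof (rule ccontr)
  assume "b \<noteq> c"
  then obtain i where "b i \<noteq> c i" by auto
  then have "i < n" using assms(1,2) by (auto simp: vec_def) (metis not_le)
  have "sum b {..<n} < sum c {..<n}"
    by (rule sum_strict_mono_ex1) (use assms(3) \<open>i < n\<close> \<open>b i \<noteq> c i\<close> in \<open>auto intro!: bexI[of _ i]\<close>)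
  then show False using assms(4) by simp
qed

lemma other_support:
  fixes y :: "nat \<Rightarrow> nat"
  assumes "y u0 < sum y {..<n}"
  shows "\<exists>u1. u1 \<noteq> u0 \<and> u1 < n \<and> 1 \<le> y u1"
proof (rule ccontr)
  assume "\<not> ?thesis"
  then have "\<forall>i\<in>{..<n}. y i = (if i = u0 then y u0 else 0)" by auto
  then have "sum y {..<n} = sum (\<lambda>i. if i = u0 then y u0 else 0) {..<n}"
    by (intro sum.cong) auto
  also have "\<dots> \<le> y u0" by (simp add: sum.delta)
  finally show False using assms by simp
qed

lemma deg_last:
  fixes m :: "nat \<Rightarrow> nat"
  assumes "1 \<le> n" "\<forall>i<n-1. m i = 0"
  shows "sum m {..<n} = m (n - 1)"
proof -
  have "n = Suc (n - 1)" using assms by simp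
  then have "sum m {..<n} = sum m {..<n-1} + m (n-1)"
    by (metis sum.lessThan_Suc)
  also have "sum m {..<n-1} = 0" using assms by simp
  finally show ?thesis by simp
qed

lemma deg_last2:
  fixes m :: "nat \<Rightarrow> nat"
  assumes "2 \<le> n" "\<forall>i<n-2. m i = 0"
  shows "sum m {..<n} = m (n - 2) + m (n - 1)"
proof -
  have "n = Suc (Suc (n - 2))" using assms by simp
  then have "sum m {..<n} = sum m {..<n-2} + m (n-2) + m (Suc (n-2))"
    by (metis sum.lessThan_Suc)
  also have "sum m {..<n-2} = 0" using assms by simp
  also have "Suc (n - 2) = n - 1" using assms by simp
  finally show ?thesis by simp
qed

lemma vec_eqI:
  assumes "vec n m" "vec n f" "\<And>i. i < n \<Longrightarrow> m i = f i"
  shows "m = f"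
proof
  fix i show "m i = f i"
    using assms by (cases "i < n") (auto simp: vec_def)
qed

lemma below_last: "(i::nat) < n \<Longrightarrow> i \<noteq> n - 1 \<Longrightarrow> i < n - 1" by (cases n) auto

locale setting =
  fixes n d :: nat and a :: "nat \<Rightarrow> nat"
  assumes n2: "n \<ge> 2" and d2: "d \<ge> 2" and aV: "a \<in> V n d"
    and sorted: "\<forall>i j. i \<le> j \<longrightarrow> j < n \<longrightarrow> a i \<le> a j"
    and ne1: "a \<noteq> (\<lambda>t. if t = n - 1 then d else 0)"
    and ne2: "a \<noteq> (\<lambda>t. if t = n - 2 then 1 else if t = n - 1 then d - 1 else 0)"
    and ne3: "a \<noteq> (\<lambda>t. if t = n - 2 then 2 else if t = n - 1 then d - 2 else 0)"
begin

definition eN :: "nat \<Rightarrow> nat" where "eN = (\<lambda>t. if t = n - 1 then d else 0)"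
definition cc :: "nat \<Rightarrow> nat" where
  "cc = (\<lambda>t. if t = n - 2 then 1 else if t = n - 1 then d - 1 else 0)"

definition PM :: "(nat \<Rightarrow> nat) \<Rightarrow> (nat \<Rightarrow> nat) \<Rightarrow> bool" where
  "PM x y \<longleftrightarrow> (\<forall>m\<in>V n d. (\<forall>i. m i \<le> x i + y i) \<longrightarrow> m \<noteq> a \<longrightarrow>
      (\<lambda>i. x i + y i - m i) \<noteq> a \<longrightarrow> \<not> lexless n m x)"

lemma a_vec: "vec n a" and a_sum: "sum a {..<n} = d"
  using aV by (auto simp: V_def)

lemma a_last: "1 \<le> a (n - 1)"
proof (rule ccontr)
  assume "\<not> ?thesis"
  have "\<And>i. i < n \<Longrightarrow> a i \<le> a (n - 1)" using sorted by simp
  then have "\<forall>i<n. a i = 0" using \<open>\<not> 1 \<le> a (n - 1)\<close> by fastforce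
  then have "sum a {..<n} = 0" by simp
  then show False using a_sum d2 by simp
qed

lemma a_pen: "1 \<le> a (n - 2)"
proof (rule ccontr)
  assume "\<not> ?thesis"
  have "\<And>i. i < n - 1 \<Longrightarrow> a i \<le> a (n - 2)" using sorted n2 by simp
  then have z: "\<forall>i<n-1. a i = 0" using \<open>\<not> 1 \<le> a (n - 2)\<close> by fastforce
  have "a (n - 1) = d" using deg_last[of n a] z n2 a_sum by simp
  then have "a = (\<lambda>t. if t = n - 1 then d else 0)"
    using z a_vec below_last by (intro vec_eqI[of n]) (auto simp: vec_def)
  then show False using ne1 by simp
qed

lemma d3: "3 \<le> d"
proof (rule ccontr)
  assume "\<not> ?thesis"
  then have d: "d = 2" using d2 by simp
  have ne: "n - 2 \<noteq> n - 1" "n - 2 < n" "n - 1 < n" using n2 by auto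
  have s: "sum a {..<n} = a (n-2) + a (n-1) + sum a ({..<n} - {n-2} - {n-1})"
    by (rule sum_two[OF ne])
  then have "a (n-2) = 1" "a (n-1) = 1" "sum a ({..<n} - {n-2} - {n-1}) = 0"
    using a_sum d a_pen a_last by linarith+
  then have "\<forall>i<n. i \<noteq> n-2 \<longrightarrow> i \<noteq> n-1 \<longrightarrow> a i = 0" by simp
  then have "a = (\<lambda>t. if t = n - 2 then 1 else if t = n - 1 then d - 1 else 0)"
    using \<open>a (n-2) = 1\<close> \<open>a (n-1) = 1\<close> a_vec d by (intro vec_eqI[of n]) (auto simp: vec_def)
  then show False using ne2 by simp
qed

lemma eN_V: "eN \<in> V n d"
proof -
  have "sum eN {..<n} = eN (n - 1)" using n2 by (intro deg_last) (auto simp: eN_def)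
  then show ?thesis using n2 by (auto simp: V_def vec_def eN_def)
qed

lemma cc_V: "cc \<in> V n d"
proof -
  have "sum cc {..<n} = cc (n - 2) + cc (n - 1)" using n2 by (intro deg_last2) (auto simp: cc_def)
  then show ?thesis using n2 d2 by (auto simp: V_def vec_def cc_def)
qed

lemma cc_ne_a: "cc \<noteq> a" using ne2 by (auto simp: cc_def)

lemma eN_ne_a: "eN \<noteq> a" using ne1 by (auto simp: eN_def)

lemma eN_min:
  assumes "m \<in> V n d" shows "\<not> lexless n m eN"
proof
  assume "lexless n m eN"
  then obtain j where j: "j < n" "\<forall>i<j. m i = eN i" "m j < eN j" by (auto simp: lexless_def)
  then have jj: "j = n - 1" by (auto simp: eN_def split: if_splits)
  then have "\<forall>i<n-1. m i = 0" using j by (auto simp: eN_def)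
  then have "sum m {..<n} = m (n - 1)" using n2 by (intro deg_last) auto
  then show False using assms j jj by (auto simp: V_def eN_def)
qed

lemma cc_second:
  assumes "m \<in> V n d" "\<not> lexless n cc m"
  shows "m = cc \<or> m = eN"
proof (rule ccontr)
  assume ne: "\<not> (m = cc \<or> m = eN)"
  then have "lexless n m cc" using lex_total[of n m cc] assms cc_V by (auto simp: V_def)
  then obtain j where j: "j < n" "\<forall>i<j. m i = cc i" "m j < cc j" by (auto simp: lexless_def)
  have nn: "n - 2 < n - 1" using n2 by simp
  have "j = n - 2 \<or> j = n - 1" using j(3) by (auto simp: cc_def split: if_splits)
  then show False
  proof
    assume jj: "j = n - 2"
    have "\<And>i. i < n - 1 \<Longrightarrow> i < n - 2 \<or> i = n - 2" using n2 by arith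
    then have z: "\<forall>i<n-1. m i = 0" using j jj nn by (fastforce simp: cc_def)
    then have "sum m {..<n} = m (n - 1)" using n2 by (intro deg_last) auto
    then have "m (n-1) = d" using assms(1) by (auto simp: V_def)
    then have "m = eN" using z assms(1) eN_V below_last by (intro vec_eqI[of n]) (auto simp: eN_def V_def)
    then show False using ne by simp
  next
    assume jj: "j = n - 1"
    then have z: "\<forall>i<n-2. m i = 0" "m (n-2) = 1" using j nn by (auto simp: cc_def)
    then have "sum m {..<n} = m (n - 2) + m (n - 1)" using n2 by (intro deg_last2) auto
    then have "m (n-1) = d - 1" using assms(1) z by (auto simp: V_def)
    then show False using j jj nn by (auto simp: cc_def)
  qed
qed

lemma case1:
  assumes xV: "x \<in> V n d" and yV: "y \<in> V n d" and pm: "PM x y"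
    and tS: "\<tau> \<in> Sv n d (\<lambda>i. x i + y i)" and tp: "TP n \<tau> (\<lambda>i. x i + y i)"
    and tx: "\<tau> \<noteq> x" and ta: "\<tau> \<noteq> a"
  shows "x = cc"
proof -
  let ?s = "\<lambda>i. x i + y i"
  have xS: "x \<in> Sv n d ?s" using xV by (auto simp: Sv_def)
  have lt: "lexless n \<tau> x" using top_le[OF tp tS xS] tx by auto
  have tle: "\<forall>i. \<tau> i \<le> ?s i" using tS by (auto simp: Sv_def)
  have R: "(\<lambda>i. ?s i - \<tau> i) = a"
    using pm tS ta lt unfolding PM_def Sv_def by blast
  then have Ri: "\<And>i. ?s i - \<tau> i = a i" by (simp add: fun_eq_iff)
  have t0: "\<forall>u<n-1. \<tau> u = 0"
  proof (intro allI impI, rule ccontr)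
    fix u assume u: "u < n - 1" "\<tau> u \<noteq> 0"
    then have "?s (n-1) \<le> \<tau> (n-1)" using tp n2 unfolding TP_def by auto
    then have "a (n-1) = 0" using Ri[of "n-1"] by simp
    then show False using a_last by simp
  qed
  have "sum \<tau> {..<n} = \<tau> (n - 1)" using n2 t0 by (intro deg_last) auto
  then have "\<tau> (n-1) = d" using tS by (auto simp: Sv_def V_def)
  then have teN: "\<tau> = eN" using t0 tS eN_V below_last by (intro vec_eqI[of n]) (auto simp: eN_def Sv_def V_def)
  have sa: "\<And>i. ?s i = a i + \<tau> i" using Ri tle by (metis le_add_diff_inverse2)
  have ccS: "\<forall>i. cc i \<le> ?s i"
    using a_pen sa teN by (auto simp: cc_def eN_def)
  have "(\<lambda>i. ?s i - cc i) \<noteq> a"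
  proof
    assume "(\<lambda>i. ?s i - cc i) = a"
    then have "?s (n-1) - cc (n-1) = a (n-1)" by (simp add: fun_eq_iff)
    moreover have "n - Suc 0 \<noteq> n - 2" using n2 by arith
    ultimately show False using sa[of "n-1"] teN d2 n2 by (auto simp: cc_def eN_def)
  qed
  then have "\<not> lexless n cc x" using pm cc_V ccS cc_ne_a unfolding PM_def by blast
  moreover have "x \<noteq> eN" using lt teN lex_irrefl by blast
  ultimately show ?thesis using cc_second[OF xV] by blast
qed

end

lemma sum_add_V:
  assumes "x \<in> V n d" "y \<in> V n d"
  shows "sum (\<lambda>i. x i + y i) {..<n} = 2 * d" "vec n (\<lambda>i. x i + y i)"
  using assms by (auto simp: V_def vec_def sum.distrib)

lemma vec_lt:
  assumes "vec n y" "0 < y v" shows "v < n"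
proof (rule ccontr)
  assume "\<not> v < n" then have "y v = 0" using assms(1) by (simp add: vec_def)
  then show False using assms(2) by simp
qed

lemma V_lt: "y \<in> V n d \<Longrightarrow> 0 < y v \<Longrightarrow> v < n"
  by (auto simp: V_def intro: vec_lt)

lemma mv_apply:
  "mv x u t i = (if i = t then Suc (x t) else if i = u then x u - 1 else x i)"
  by (auto simp: mv_def)

context setting begin

lemma star:
  assumes xV: "x \<in> V n d" and yV: "y \<in> V n d" and pm: "PM x y"
    and tp: "TP n a (\<lambda>i. x i + y i)" and aS: "a \<in> Sv n d (\<lambda>i. x i + y i)"
  shows "\<forall>m\<in>Sv n d (\<lambda>i. x i + y i). m \<noteq> a \<longrightarrow> \<not> lexless n m x"
proof (intro ballI impI notI)
  let ?s = "\<lambda>i. x i + y i"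
  fix m assume mS: "m \<in> Sv n d ?s" and ma: "m \<noteq> a" and lt: "lexless n m x"
  have "(\<lambda>i. ?s i - m i) = a" using pm mS ma lt unfolding PM_def Sv_def by blast
  then have "m = (\<lambda>i. ?s i - a i)" using mS by (auto simp: fun_eq_iff Sv_def) (metis diff_diff_cancel)
  moreover have "x \<in> Sv n d ?s" using xV by (auto simp: Sv_def)
  ultimately show False using bot_max[OF tp aS _ sum_add_V[OF xV yV]] lt by auto
qed

lemma case2:
  assumes xV: "x \<in> V n d" and yV: "y \<in> V n d" and zV: "z \<in> V n d"
    and pmyz: "PM y z"
    and m1V: "m1 \<in> V n d" and m1le: "\<forall>i. m1 i \<le> x i + y i + z i" and m1lt: "lexless n m1 x"
    and tpx: "TP n x (\<lambda>i. x i + y i)"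
  shows False
proof -
  let ?s' = "\<lambda>i. y i + z i"
  obtain u t where ut: "u < t" "t < n" "1 \<le> x u" "1 \<le> ?s' t"
    using move_exists[OF m1V xV, of ?s'] m1le m1lt by (auto simp: add.assoc)
  have "x t + y t \<le> x t" using tpx ut unfolding TP_def by auto
  then have yt: "y t = 0" and zt: "1 \<le> z t" using ut by auto
  have yl: "\<And>v. 1 \<le> y v \<Longrightarrow> v \<le> u"
  proof (rule ccontr)
    fix v assume v: "1 \<le> y v" "\<not> v \<le> u"
    then have "v < n" using yV V_lt by fastforce
    have "u < v" using v by simp
    then have "x v + y v \<le> x v" using tpx[unfolded TP_def, rule_format, of u v] ut \<open>v < n\<close> by simp
    then show False using v by simp
  qed
  have "y n < sum y {..<n}" using yV d2 by (auto simp: V_def vec_def)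
  then obtain v0 where v0: "v0 < n" "1 \<le> y v0" using other_support[of y n n] by auto
  have yS: "y \<in> Sv n d ?s'" using yV by (auto simp: Sv_def)
  have mvS: "mv y v t \<in> Sv n d ?s' \<and> lexless n (mv y v t) y" if "1 \<le> y v" for v
  proof -
    have "v < t" using yl[OF that] ut by simp
    then show ?thesis using mv_V[OF yV, of v t] that ut zt yV
      by (auto simp: Sv_def mv_apply intro!: mv_lex)
  qed
  obtain \<tau> where tS: "\<tau> \<in> Sv n d ?s'" and tp: "TP n \<tau> ?s'" using top_exists[OF yS] by blast
  have "\<tau> \<noteq> y" using top_min[OF tp tS] mvS[OF v0(2)] by blast
  show False
  proof (cases "\<tau> = a")
    case False
    then have "y = cc" using case1[OF yV zV pmyz tS tp \<open>\<tau> \<noteq> y\<close>] by simp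
    then have "1 \<le> y (n - 1)" using d2 n2 by (auto simp: cc_def)
    then have "n - 1 \<le> u" using yl by simp
    then show False using ut by simp
  next
    case True
    have mva: "mv y v t = a" if "1 \<le> y v" for v
    proof (rule ccontr)
      assume ne: "mv y v t \<noteq> a"
      have "(\<lambda>i. ?s' i - mv y v t i) = a"
        using pmyz mvS[OF that] ne unfolding PM_def Sv_def by blast
      then have "mv y v t = (\<lambda>i. ?s' i - a i)"
        using mvS[OF that] by (auto simp: fun_eq_iff Sv_def) (metis diff_diff_cancel)
      then show False using bot_max[OF tp[unfolded True] tS[unfolded True] yS sum_add_V[OF yV zV]]
          mvS[OF that] by auto
    qed
    show False
    proof (cases "\<exists>v1. v1 \<noteq> v0 \<and> v1 < n \<and> 1 \<le> y v1")
      case True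
      then obtain v1 where v1: "v1 \<noteq> v0" "1 \<le> y v1" by auto
      have "v0 \<noteq> t" using v0 yt by auto
      have "mv y v0 t v0 = mv y v1 t v0" using mva v1 v0 by simp
      then show False using v1 v0 \<open>v0 \<noteq> t\<close> by (auto simp: mv_apply)
    next
      case False
      then have "\<not> y v0 < sum y {..<n}" using other_support[of y v0 n] by blast
      then have "d \<le> y v0" using yV by (auto simp: V_def)
      have "v0 \<noteq> t" using v0 yt by auto
      have "a v0 = y v0 - 1" "a t = 1" using mva[OF v0(2)] \<open>v0 \<noteq> t\<close> yt
        by (auto simp: fun_eq_iff mv_apply dest: spec[of _ v0] spec[of _ t])
      moreover have "a v0 \<le> a t" using sorted yl[OF v0(2)] ut by auto
      ultimately show False using \<open>d \<le> y v0\<close> d3 by simp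
    qed
  qed
qed

end

context setting begin

lemma case3a:
  assumes xV: "x \<in> V n d" and yV: "y \<in> V n d" and zV: "z \<in> V n d" and ya: "y \<noteq> a"
    and aS: "a \<in> Sv n d (\<lambda>i. x i + y i)"
    and X: "\<forall>m\<in>Sv n d (\<lambda>i. x i + y i). m \<noteq> a \<longrightarrow> \<not> lexless n m x"
    and tpy: "TP n y (\<lambda>i. y i + z i)"
    and m1V: "m1 \<in> V n d" and m1a: "m1 \<noteq> a" and m1le: "\<forall>i. m1 i \<le> x i + y i + z i"
    and m1lt: "lexless n m1 x"
  shows False
proof -
  let ?s = "\<lambda>i. x i + y i"
  let ?T = "\<lambda>i. x i + y i + z i"
  have m1A: "m1 \<in> Sv n d ?T - {a}" using m1V m1a m1le by (auto simp: Sv_def)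
  obtain \<mu> where muA: "\<mu> \<in> Sv n d ?T - {a}" and mumin: "\<forall>b\<in>Sv n d ?T - {a}. \<not> lexless n b \<mu>"
    using lex_min_exists[of "Sv n d ?T - {a}" n] finite_Sv m1A by blast
  have muV: "\<mu> \<in> V n d" and mua: "\<mu> \<noteq> a" and mule: "\<forall>i. \<mu> i \<le> ?T i"
    using muA by (auto simp: Sv_def)
  have "\<mu> = m1 \<or> lexless n \<mu> m1"
    using lex_total[of n \<mu> m1] mumin m1A muV m1V by (auto simp: V_def)
  then have mult: "lexless n \<mu> x" using m1lt lex_trans by blast
  have "\<mu> \<notin> Sv n d ?s" using X mua mult by blast
  then obtain \<zeta> where zeta: "?s \<zeta> < \<mu> \<zeta>" using muV by (auto simp: Sv_def not_le)
  then have zz: "1 \<le> z \<zeta>" using mule[rule_format, of \<zeta>] by linarith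
  have zn: "\<zeta> < n" using V_lt[OF muV, of \<zeta>] zeta by simp
  have y0: "\<forall>i<\<zeta>. y i = 0"
  proof (intro allI impI, rule ccontr)
    fix i assume "i < \<zeta>" "y i \<noteq> 0"
    then have "y \<zeta> + z \<zeta> \<le> y \<zeta>" using tpy[unfolded TP_def, rule_format, of i \<zeta>] zn by simp
    then show False using zz by simp
  qed
  obtain w where w: "\<zeta> < w" "w < n" "\<mu> w < ?T w"
  proof (rule ccontr)
    assume "\<not> thesis"
    then have hi: "\<forall>w. \<zeta> < w \<longrightarrow> w < n \<longrightarrow> ?T w \<le> \<mu> w" using that by (meson not_le)
    have "sum y {..<n} < sum \<mu> {..<n}"
    proof (rule sum_strict_mono_ex1)
      show "\<forall>i\<in>{..<n}. y i \<le> \<mu> i"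
      proof
        fix i assume "i \<in> {..<n}"
        show "y i \<le> \<mu> i"
        proof (cases "i < \<zeta>")
          case True then show ?thesis using y0 by simp
        next
          case False
          show ?thesis
          proof (cases "i = \<zeta>")
            case True then show ?thesis using zeta by simp
          next
            case False
            then have "?T i \<le> \<mu> i" using hi \<open>\<not> i < \<zeta>\<close> \<open>i \<in> {..<n}\<close> by simp
            then show ?thesis by simp
          qed
        qed
      qed
      show "\<exists>i\<in>{..<n}. y i < \<mu> i" using zeta zn by (intro bexI[of _ \<zeta>]) auto
    qed simp
    then show False using yV muV by (simp add: V_def)
  qed
  have mz1: "1 \<le> \<mu> \<zeta>" using zeta by simp
  have mvS: "mv \<mu> \<zeta> w \<in> Sv n d ?T"
    using mv_V[OF muV, of \<zeta> w] w zn mz1 mule by (auto simp: Sv_def mv_apply) (meson diff_le_self le_trans)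
  have "lexless n (mv \<mu> \<zeta> w) \<mu>" using w mz1 by (intro mv_lex) auto
  then have mva: "mv \<mu> \<zeta> w = a" using mumin mvS by blast
  have ai: "\<And>i. a i = (if i = w then Suc (\<mu> w) else if i = \<zeta> then \<mu> \<zeta> - 1 else \<mu> i)"
    using mva[symmetric] by (simp add: mv_apply)
  have ale: "\<forall>i. a i \<le> ?s i" using aS by (auto simp: Sv_def)
  have sz: "?s \<zeta> = a \<zeta>" using ai[of \<zeta>] ale[rule_format, of \<zeta>] zeta w by auto
  show False
  proof (cases "\<exists>q. \<zeta> < q \<and> q < n \<and> a q < ?s q")
    case True
    then obtain q where q: "\<zeta> < q" "q < n" "a q < ?s q" by blast
    obtain r where r: "r \<noteq> q" "r < n" "1 \<le> a r"
    proof (cases "q = n - 1")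
      case True then show ?thesis using that[of "n-2"] n2 a_pen by auto
    next
      case False then show ?thesis using that[of "n-1"] n2 a_last by auto
    qed
    let ?c = "mv a r q"
    have cS: "?c \<in> Sv n d ?s"
      using mv_V[OF aV, of r q] r q ale by (auto simp: Sv_def mv_apply) (meson diff_le_self le_trans)
    have ca: "?c \<noteq> a"
    proof
      assume "?c = a" then have "?c q = a q" by simp
      then show False using r by (simp add: mv_apply)
    qed
    have "lexless n ?c \<mu>"
    proof (cases "r < \<zeta>")
      case True
      show ?thesis unfolding lexless_def
        using True r q w ai zn by (intro exI[of _ r]) (auto simp: mv_apply)
    next
      case False
      show ?thesis unfolding lexless_def
        using False r q w ai zn mz1 by (intro exI[of _ \<zeta>]) (auto simp: mv_apply)
    qed
    then have "lexless n ?c x" using mult lex_trans by blast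
    then show False using X cS ca by blast
  next
    case False
    have "y = a"
    proof (rule sum_le_eq[of n])
      show "vec n y" "vec n a" using yV aV by (auto simp: V_def)
      show "sum y {..<n} = sum a {..<n}" using yV aV by (auto simp: V_def)
      show "\<forall>i<n. y i \<le> a i"
      proof (intro allI impI)
        fix i assume "i < n"
        show "y i \<le> a i"
        proof (cases "i < \<zeta>")
          case True then show ?thesis using y0 by simp
        next
          case nl: False
          show ?thesis
          proof (cases "i = \<zeta>")
            case True then show ?thesis using sz by simp
          next
            case False
            then have "?s i \<le> a i" using \<open>\<not> (\<exists>q. \<zeta> < q \<and> q < n \<and> a q < ?s q)\<close> nl \<open>i < n\<close>
              by (meson linorder_neqE_nat not_le)
            then show ?thesis by simp
          qed
        qed
      qed
    qed
    then show False using ya by simp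
  qed
qed

end

context setting begin

lemma case3c:
  assumes xV: "x \<in> V n d" and yV: "y \<in> V n d" and zV: "z \<in> V n d" and ya: "y \<noteq> a"
    and tps: "TP n a (\<lambda>i. x i + y i)" and aS: "a \<in> Sv n d (\<lambda>i. x i + y i)"
    and tps': "TP n a (\<lambda>i. y i + z i)" and aS': "a \<in> Sv n d (\<lambda>i. y i + z i)"
    and X: "\<forall>m\<in>Sv n d (\<lambda>i. x i + y i). m \<noteq> a \<longrightarrow> \<not> lexless n m x"
    and Y: "\<forall>m\<in>Sv n d (\<lambda>i. y i + z i). m \<noteq> a \<longrightarrow> \<not> lexless n m y"
  shows False
proof -
  let ?s = "\<lambda>i. x i + y i"
  let ?s' = "\<lambda>i. y i + z i"
  have yS': "y \<in> Sv n d ?s'" using yV by (auto simp: Sv_def)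
  have "\<not> TP n y ?s'" using top_unique[OF tps' aS' _ yS'] ya by blast
  then obtain v t where vt: "v < t" "t < n" "0 < y v" "\<not> ?s' t \<le> y t"
    unfolding TP_def by blast
  have zt: "1 \<le> z t" using vt by simp
  have ymove: "mv y v' t = a" if "v' < t" "1 \<le> y v'" for v'
  proof (rule ccontr)
    assume "mv y v' t \<noteq> a"
    moreover have "mv y v' t \<in> Sv n d ?s'"
      using mv_V[OF yV, of v' t] that vt zt by (auto simp: Sv_def mv_apply)
    moreover have "lexless n (mv y v' t) y" using that vt by (intro mv_lex) auto
    ultimately show False using Y by blast
  qed
  have yuniq: "v' = v" if "v' < t" "1 \<le> y v'" for v'
  proof (rule ccontr)
    assume "v' \<noteq> v"
    have "mv y v' t v' = mv y v t v'" using ymove[OF that] ymove[of v] vt by simp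
    then show False using that \<open>v' \<noteq> v\<close> by (auto simp: mv_apply)
  qed
  have ai: "\<And>i. a i = (if i = t then Suc (y t) else if i = v then y v - 1 else y i)"
    using ymove[of v] vt by (auto simp: mv_apply)
  have xmove: "mv x u w = a" if "u < w" "w < n" "1 \<le> x u" "1 \<le> y w" for u w
  proof (rule ccontr)
    assume "mv x u w \<noteq> a"
    moreover have "mv x u w \<in> Sv n d ?s"
      using mv_V[OF xV, of u w] that by (auto simp: Sv_def mv_apply)
    moreover have "lexless n (mv x u w) x" using that by (intro mv_lex) auto
    ultimately show False using X by blast
  qed
  have ale: "\<forall>i. a i \<le> ?s i" using aS by (auto simp: Sv_def)
  have xsum: "sum x {..<n} = d" using xV by (simp add: V_def)
  show False
  proof (cases "1 \<le> t \<and> 1 \<le> a (t - 1)")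
    case True
    have "1 \<le> y (t - 1)" using ai[of "t-1"] True vt by (auto split: if_splits)
    then have vv: "v = t - 1" using yuniq[of "t-1"] True by simp
    have F2: "?s t' \<le> a t'" if "t - 1 < t'" "t' < n" for t'
      using tps[unfolded TP_def, rule_format, of "t-1" t'] that True by simp
    have xt: "x t = 1" using F2[of t] ale[rule_format, of t] ai[of t] vt True by auto
    have xhi: "x t' = 0" if "t < t'" "t' < n" for t'
      using F2[of t'] ai[of t'] that vt vv by (auto split: if_splits)
    show False
    proof (cases "t < n - 1")
      case True
      have "1 \<le> y (n - 1)" using ai[of "n-1"] a_last True vv by (auto split: if_splits)
      then have "mv x t (n-1) = a" using xmove[of t "n-1"] True xt n2 by simp
      then have "a t = x t - 1" by (auto simp: fun_eq_iff mv_apply dest: spec[of _ t] split: if_splits)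
        (use True in simp)
      then show False using ai[of t] xt by simp
    next
      case False
      then have tn: "t = n - 1" using vt by simp
      then have vn: "v = n - 2" using vv by simp
      have a0: "\<forall>i<n-2. a i = 0"
      proof (intro allI impI, rule ccontr)
        fix i assume "i < n - 2" "a i \<noteq> 0"
        then have "1 \<le> y i" "i < t" using ai[of i] tn vn by (auto split: if_splits)
        then have "i = v" using yuniq by simp
        then show False using \<open>i < n - 2\<close> vn by simp
      qed
      have asum: "a (n-2) + a (n-1) = d" using deg_last2[of n a] n2 a0 a_sum by simp
      have a3: "3 \<le> a (n - 2)"
      proof (rule ccontr)
        assume "\<not> ?thesis"
        then have "a (n-2) = 1 \<or> a (n-2) = 2" using a_pen by auto
        then show False
        proof
          assume h: "a (n-2) = 1"
          have "a = (\<lambda>t. if t = n - 2 then 1 else if t = n - 1 then d - 1 else 0)"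
            using a0 h asum a_vec n2 by (intro vec_eqI[of n]) (auto simp: vec_def)
          then show False using ne2 by simp
        next
          assume h: "a (n-2) = 2"
          have "a = (\<lambda>t. if t = n - 2 then 2 else if t = n - 1 then d - 2 else 0)"
            using a0 h asum a_vec n2 by (intro vec_eqI[of n]) (auto simp: vec_def)
          then show False using ne3 by simp
        qed
      qed
      have "a (n-2) \<le> a (n-1)" using sorted n2 by simp
      then have an: "3 \<le> a (n-1)" using a3 by simp
      have "1 \<le> y (n - 1)" using ai[of "n-1"] tn an by simp
      have "x (n-1) < sum x {..<n}" using xt tn xsum d3 by simp
      then obtain u0 where u0: "u0 \<noteq> n - 1" "u0 < n" "1 \<le> x u0" using other_support[of x "n-1" n] by blast
      have "mv x u0 (n-1) = a" using xmove[of u0 "n-1"] u0 \<open>1 \<le> y (n - 1)\<close> n2 by simp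
      then have "a (n-1) = Suc (x (n-1))" by (auto simp: fun_eq_iff mv_apply dest: spec[of _ "n-1"])
      then show False using xt tn an by simp
    qed
  next
    case False
    have alow: "a i = 0" if "i < t" for i
    proof -
      have "a i \<le> a (t - 1)" using sorted that vt by simp
      then show ?thesis using False that by auto
    qed
    have tlt: "t < n - 1"
    proof (rule ccontr)
      assume "\<not> t < n - 1"
      then have "n - 2 < t" using n2 by arith
      then show False using alow[of "n-2"] a_pen by simp
    qed
    have at: "1 \<le> a t" using ai[of t] by simp
    have xhi: "x t' = 0" if "t < t'" "t' < n" for t'
    proof -
      have "?s t' \<le> a t'" using tps[unfolded TP_def, rule_format, of t t'] that at by simp
      then show ?thesis using ai[of t'] that vt by (auto split: if_splits)
    qed
    have yn: "1 \<le> y (n - 1)" using ai[of "n-1"] a_last tlt vt by (auto split: if_splits)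
    have "x n < sum x {..<n}" using xV d2 by (auto simp: V_def vec_def)
    then obtain u0 where u0: "u0 < n" "1 \<le> x u0" using other_support[of x n n] by auto
    have u0t: "u0 \<le> t" using xhi[of u0] u0 by fastforce
    then have m0: "mv x u0 (n-1) = a" using xmove[of u0 "n-1"] u0 yn tlt by simp
    then have "a (n-1) = Suc (x (n-1))" by (auto simp: fun_eq_iff mv_apply dest: spec[of _ "n-1"])
    moreover have "x (n-1) = 0" using xhi[of "n-1"] tlt n2 by simp
    ultimately have an1: "a (n-1) = 1" by simp
    have "a u0 = x u0 - 1" using m0 u0t tlt by (auto simp: fun_eq_iff mv_apply dest: spec[of _ u0])
    moreover have "a u0 \<le> a (n-1)" using sorted u0 by simp
    ultimately have "x u0 \<le> 2" using an1 by simp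
    then have "x u0 < sum x {..<n}" using xsum d3 by simp
    then obtain u1 where u1: "u1 \<noteq> u0" "u1 < n" "1 \<le> x u1" using other_support[of x u0 n] by blast
    have "u1 \<le> t" using xhi[of u1] u1 by fastforce
    then have "mv x u1 (n-1) = a" using xmove[of u1 "n-1"] u1 yn tlt by simp
    then have "mv x u1 (n-1) u0 = mv x u0 (n-1) u0" using m0 by simp
    then show False using u1 u0t tlt u0 by (auto simp: mv_apply split: if_splits)
  qed
qed

end

context setting begin

lemma core:
  assumes xV: "x \<in> V n d" and yV: "y \<in> V n d" and zV: "z \<in> V n d"
    and xa: "x \<noteq> a" and ya: "y \<noteq> a"
    and pmxy: "PM x y" and pmyz: "PM y z"
    and m1V: "m1 \<in> V n d" and m1a: "m1 \<noteq> a" and m1le: "\<forall>i. m1 i \<le> x i + y i + z i"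
    and m1lt: "lexless n m1 x"
  shows "x = cc"
proof -
  let ?s = "\<lambda>i. x i + y i"
  let ?s' = "\<lambda>i. y i + z i"
  have xS: "x \<in> Sv n d ?s" using xV by (auto simp: Sv_def)
  have yS': "y \<in> Sv n d ?s'" using yV by (auto simp: Sv_def)
  obtain \<tau> where tS: "\<tau> \<in> Sv n d ?s" and tp: "TP n \<tau> ?s" using top_exists[OF xS] by blast
  show ?thesis
  proof (cases "\<tau> = x")
    case True
    then show ?thesis using case2[OF xV yV zV pmyz m1V m1le m1lt] tp by simp
  next
    case tx: False
    show ?thesis
    proof (cases "\<tau> = a")
      case False
      then show ?thesis using case1[OF xV yV pmxy tS tp tx] by simp
    next
      case True
      have tpa: "TP n a ?s" and aS: "a \<in> Sv n d ?s" using tp tS True by auto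
      have X: "\<forall>m\<in>Sv n d ?s. m \<noteq> a \<longrightarrow> \<not> lexless n m x" by (rule star[OF xV yV pmxy tpa aS])
      obtain \<sigma> where sS: "\<sigma> \<in> Sv n d ?s'" and sp: "TP n \<sigma> ?s'" using top_exists[OF yS'] by blast
      show ?thesis
      proof (cases "\<sigma> = y")
        case True
        then show ?thesis using case3a[OF xV yV zV ya aS X _ m1V m1a m1le m1lt] sp by simp
      next
        case sy: False
        show ?thesis
        proof (cases "\<sigma> = a")
          case True
          have tpa': "TP n a ?s'" and aS': "a \<in> Sv n d ?s'" using sp sS True by auto
          have Y: "\<forall>m\<in>Sv n d ?s'. m \<noteq> a \<longrightarrow> \<not> lexless n m y" by (rule star[OF yV zV pmyz tpa' aS'])
          show ?thesis using case3c[OF xV yV zV ya tpa aS tpa' aS' X Y] by simp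
        next
          case False
          then have ycc: "y = cc" using case1[OF yV zV pmyz sS sp sy] by simp
          have "cc \<in> Sv n d ?s" using ycc cc_V by (auto simp: Sv_def)
          then have "\<not> lexless n cc x" using X cc_ne_a by blast
          then have "x = cc \<or> x = eN" using cc_second[OF xV] by simp
          moreover have "x \<noteq> eN"
          proof
            assume "x = eN"
            have "lexless n a x" using top_le[OF tpa aS xS] xa by auto
            then show False using eN_min[OF aV] \<open>x = eN\<close> by simp
          qed
          ultimately show ?thesis by simp
        qed
      qed
    qed
  qed
qed

lemma PM_cc_cc: "\<not> PM cc cc"
proof
  assume pm: "PM cc cc"
  have "eN \<in> V n d" by (rule eN_V)
  moreover have "\<forall>i. eN i \<le> cc i + cc i" using d3 n2 by (auto simp: eN_def cc_def)
  moreover have "(\<lambda>i. cc i + cc i - eN i) \<noteq> a"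
  proof
    assume h: "(\<lambda>i. cc i + cc i - eN i) = a"
    have "a = (\<lambda>t. if t = n - 2 then 2 else if t = n - 1 then d - 2 else 0)"
      using n2 d3 h[symmetric] by (auto simp: fun_eq_iff eN_def cc_def)
    then show False using ne3 by simp
  qed
  moreover have "lexless n eN cc"
    unfolding lexless_def using n2 d3 by (intro exI[of _ "n-2"]) (auto simp: eN_def cc_def)
  ultimately show False using pm eN_ne_a unfolding PM_def by blast
qed

lemma PM_cc_mid:
  assumes yV: "y \<in> V n d" and ya: "y \<noteq> a" and p1: "PM cc y" and p2: "PM y cc"
  shows False
proof (cases "y = cc")
  case True then show ?thesis using PM_cc_cc p1 by simp
next
  case ycc: False
  show ?thesis
  proof (cases "y = eN")
    case True
    have "(\<lambda>i. cc i + y i - eN i) = cc" using True by (auto simp: fun_eq_iff eN_def)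
    moreover have "\<forall>i. eN i \<le> cc i + y i" using True by simp
    moreover have "lexless n eN cc"
      unfolding lexless_def using n2 d3 by (intro exI[of _ "n-2"]) (auto simp: eN_def cc_def)
    ultimately show False using p1 eN_V eN_ne_a cc_ne_a unfolding PM_def by auto
  next
    case False
    then have "lexless n cc y" using cc_second[OF yV] ycc by auto
    moreover have "(\<lambda>i. y i + cc i - cc i) = y" by simp
    moreover have "\<forall>i. cc i \<le> y i + cc i" by simp
    ultimately show False using p2 cc_V cc_ne_a ya unfolding PM_def by auto
  qed
qed

end

section \<open>Chains\<close>

lemma node_0: "node ls 0 = (\<lambda>_. 0)"
  by (simp add: node_def)

lemma node_Suc: "node ls (Suc j) = (\<lambda>t. node ls j t + (ls ! j) t)"
  by (simp add: node_def)

lemma node_deg: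
  assumes "set ls \<subseteq> V n d" "j \<le> length ls"
  shows "vec n (node ls j) \<and> sum (node ls j) {..<n} = d * j"
  using assms(2)
proof (induction j)
  case 0 then show ?case by (simp add: node_0 vec_def)
next
  case (Suc j)
  then have "ls ! j \<in> V n d" using assms(1) by (auto dest: nth_mem)
  then show ?case using Suc by (auto simp: node_Suc vec_def V_def sum.distrib)
qed

lemma chain_len:
  assumes "p \<in> chains n d lam" "q \<in> chains n d lam" "0 < d"
  shows "length q = length p"
proof -
  have "sum lam {..<n} = d * length p" "sum lam {..<n} = d * length q"
    using node_deg[of p n d "length p"] node_deg[of q n d "length q"] assms(1,2)
    by (auto simp: chains_def)
  then show ?thesis using assms(3) by simp
qed

lemma node_inj:
  assumes "set p \<subseteq> V n d" "set q \<subseteq> V n d" "0 < d" "j \<le> length p" "j' \<le> length q"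
    "node q j' = node p j"
  shows "j' = j"
proof -
  have "sum (node q j') {..<n} = d * j'" "sum (node p j) {..<n} = d * j"
    using node_deg[OF assms(1,4)] node_deg[OF assms(2,5)] by auto
  then show ?thesis using assms(3,6) by simp
qed

lemma link_eq:
  assumes "node q m = node p m" "node q (Suc m) = node p (Suc m)"
  shows "q ! m = p ! m"
proof
  fix t
  have "node q m t + (q ! m) t = node p m t + (p ! m) t"
    using assms(2) by (simp add: node_Suc fun_eq_iff)
  then show "(q ! m) t = (p ! m) t" using assms(1) by simp
qed

lemma node_window:
  "node ls (h + 3) t = node ls h t + (ls ! h) t + (ls ! (h + 1)) t + (ls ! (h + 2)) t"
  by (simp add: node_Suc numeral_3_eq_3)

lemma adeg_card: "adeg a ls = card {j. j < length ls \<and> ls ! j = a}"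
  by (simp add: adeg_def length_filter_conv_card)

lemma adeg_cmp:
  assumes "length q = length p" "\<forall>j<length p. j \<notin> W \<longrightarrow> q ! j = p ! j"
    "\<forall>j\<in>W. j < length p \<longrightarrow> p ! j \<noteq> a"
  shows "adeg a p \<le> adeg a q"
    and "adeg a q \<le> adeg a p \<Longrightarrow> \<forall>j\<in>W. j < length p \<longrightarrow> q ! j \<noteq> a"
proof -
  let ?Ap = "{j. j < length p \<and> p ! j = a}"
  let ?Aq = "{j. j < length q \<and> q ! j = a}"
  have sub: "?Ap \<subseteq> ?Aq" using assms by auto
  have fin: "finite ?Aq" by simp
  show "adeg a p \<le> adeg a q" unfolding adeg_card using card_mono[OF fin sub] .
  assume "adeg a q \<le> adeg a p"
  then have "card ?Aq \<le> card ?Ap" unfolding adeg_card .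
  then have "?Ap = ?Aq" using card_seteq[OF fin sub] by simp
  show "\<forall>j\<in>W. j < length p \<longrightarrow> q ! j \<noteq> a"
  proof (intro ballI impI notI)
    fix j assume j: "j \<in> W" "j < length p" "q ! j = a"
    then have "j \<in> ?Aq" using assms(1) by simp
    then have "j \<in> ?Ap" using \<open>?Ap = ?Aq\<close> by simp
    then show False using assms(3) j by simp
  qed
qed

lemma adeg_less:
  assumes "length q = length p" "\<forall>j<length p. j \<notin> W \<longrightarrow> q ! j = p ! j"
    "\<forall>j\<in>W. j < length p \<longrightarrow> q ! j \<noteq> a" "j0 \<in> W" "j0 < length p" "p ! j0 = a"
  shows "adeg a q < adeg a p"
proof -
  let ?Ap = "{j. j < length p \<and> p ! j = a}"
  let ?Aq = "{j. j < length q \<and> q ! j = a}"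
  have "?Aq \<subseteq> ?Ap" using assms by auto
  moreover have "j0 \<in> ?Ap" "j0 \<notin> ?Aq" using assms by auto
  ultimately have "?Aq < ?Ap" by blast
  then show ?thesis unfolding adeg_card by (intro psubset_card_mono) auto
qed

lemma node_prefix:
  assumes "\<forall>m<j. q ! m = p ! m"
  shows "node q j = node p j"
  using assms by (auto simp: node_def fun_eq_iff intro!: sum.cong)

lemma node_repl:
  assumes "\<forall>m<j. m \<noteq> h \<longrightarrow> m \<noteq> Suc h \<longrightarrow> q ! m = p ! m"
    "\<forall>t. (q ! h) t + (q ! Suc h) t = (p ! h) t + (p ! Suc h) t"
    "Suc (Suc h) \<le> j"
  shows "node q j = node p j"
  using assms(3,1)
proof (induction j rule: dec_induct)
  case base
  have "node q h = node p h" using base by (intro node_prefix) auto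
  then show ?case using assms(2) by (simp add: node_Suc fun_eq_iff add.assoc)
next
  case (step j)
  then have "node q j = node p j" by auto
  moreover have "q ! j = p ! j" using step by auto
  ultimately show ?case by (simp add: node_Suc)
qed

lemma face_mem:
  assumes pc: "p \<in> chains n d lam" and qc: "q \<in> chains n d lam" and d0: "0 < d"
    and fl: "facet_less n a q p" and L: "L \<subseteq> {1..<length p}"
    and ag: "\<forall>j\<in>L. node q j = node p j"
  shows "labelled_face p L \<in> F_less_cap n d a lam p"
proof -
  have len: "length q = length p" using chain_len[OF pc qc d0] .
  have "labelled_face p L \<subseteq> open_chain q"
    unfolding labelled_face_def open_chain_def using L ag len by (auto intro!: image_eqI)
  moreover have "labelled_face p L \<subseteq> open_chain p"
    unfolding labelled_face_def open_chain_def using L by auto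
  ultimately show ?thesis using qc fl unfolding F_less_cap_def F_less_def by auto
qed

lemma not_facet:
  assumes pc: "p \<in> chains n d lam" and d0: "0 < d"
    and tK: "labelled_face p ({1..<length p} - {g}) \<in> F_less_cap n d a lam p"
    and gD: "g \<in> D" and jD: "j' \<in> D" "j' \<noteq> g" "1 \<le> j'" "j' < length p"
  shows "\<not> is_facet (F_less_cap n d a lam p) (labelled_face p ({1..<length p} - D))"
proof
  let ?S = "labelled_face p ({1..<length p} - D)"
  let ?t = "labelled_face p ({1..<length p} - {g})"
  assume "is_facet (F_less_cap n d a lam p) ?S"
  moreover have "?S \<subseteq> ?t" unfolding labelled_face_def using gD by auto
  ultimately have "?t = ?S" using tK unfolding is_facet_def by blast
  moreover have "node p j' \<in> ?t" unfolding labelled_face_def using jD by auto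
  ultimately obtain j where j: "j \<in> {1..<length p} - D" "node p j = node p j'"
    unfolding labelled_face_def by auto
  have sp: "set p \<subseteq> V n d" using pc by (auto simp: chains_def)
  have "j = j'" using node_inj[OF sp sp d0, of j' j] j jD by auto
  then show False using j jD by auto
qed

lemma pair_face:
  assumes pc: "p \<in> chains n d lam" and d0: "0 < d" and gk: "Suc g < length p"
    and mV: "m \<in> V n d" and m'V: "m' \<in> V n d"
    and sm: "\<forall>t. m t + m' t = (p ! g) t + (p ! Suc g) t"
    and fl: "facet_less n a (p[g := m, Suc g := m']) p"
  shows "labelled_face p ({1..<length p} - {Suc g}) \<in> F_less_cap n d a lam p"
proof -
  let ?q = "p[g := m, Suc g := m']"
  have len: "length ?q = length p" by simp
  have qg: "?q ! g = m" "?q ! Suc g = m'" using gk by (auto simp: nth_list_update)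
  have qo: "\<And>j. j \<noteq> g \<Longrightarrow> j \<noteq> Suc g \<Longrightarrow> ?q ! j = p ! j" by (simp add: nth_list_update)
  have sp: "set p \<subseteq> V n d" using pc by (auto simp: chains_def)
  have sq: "set ?q \<subseteq> V n d"
    using sp mV m'V set_update_subset_insert[of "p[g := m]" "Suc g" m'] set_update_subset_insert[of p g m]
    by blast
  have ag: "node ?q j = node p j" if "j \<le> length p" "j \<noteq> Suc g" for j
  proof (cases "j \<le> g")
    case True
    then show ?thesis using qo by (intro node_prefix) auto
  next
    case False
    then have "Suc (Suc g) \<le> j" using that by simp
    then show ?thesis using qo qg sm by (intro node_repl[of j g]) auto
  qed
  have "node ?q (length ?q) = lam" using ag[of "length p"] gk pc by (auto simp: chains_def)
  then have qc: "?q \<in> chains n d lam" using sq by (simp add: chains_def)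
  show ?thesis by (rule face_mem[OF pc qc d0 fl]) (use ag in auto)
qed

context setting begin

lemma pair_block:
  assumes gg: "sumset (V n d - {a}) (V n d - {a}) = V n (2 * d)"
    and pc: "p \<in> chains n d lam" and gk: "Suc g < length p"
    and fac: "is_facet (F_less_cap n d a lam p) (labelled_face p ({1..<length p} - D))"
    and gD: "Suc g \<in> D" and jD: "j' \<in> D" "j' \<noteq> Suc g" "1 \<le> j'" "j' < length p"
  shows "p ! g \<noteq> a \<and> p ! Suc g \<noteq> a \<and> PM (p ! g) (p ! Suc g)"
proof -
  let ?x = "p ! g" and ?y = "p ! Suc g"
  have d0: "0 < d" using d2 by simp
  have sp: "set p \<subseteq> V n d" using pc by (auto simp: chains_def)
  have xV: "?x \<in> V n d" and yV: "?y \<in> V n d" using sp gk by (auto dest: nth_mem)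
  have kill: False if "m \<in> V n d" "m' \<in> V n d" "\<forall>t. m t + m' t = ?x t + ?y t"
      "facet_less n a (p[g := m, Suc g := m']) p" for m m'
    using not_facet[OF pc d0 pair_face[OF pc d0 gk that] gD jD] fac by simp
  let ?W = "{g, Suc g}"
  have xya: "?x \<noteq> a \<and> ?y \<noteq> a"
  proof (rule ccontr)
    assume h: "\<not> (?x \<noteq> a \<and> ?y \<noteq> a)"
    have "vadd ?x ?y \<in> V n (2 * d)" using xV yV by (auto simp: V_def vec_def vadd_def sum.distrib)
    then have "vadd ?x ?y \<in> sumset (V n d - {a}) (V n d - {a})" using gg by simp
    then obtain b c where bc: "b \<in> V n d - {a}" "c \<in> V n d - {a}" "vadd ?x ?y = vadd b c"
      unfolding sumset_def by auto
    let ?q = "p[g := b, Suc g := c]"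
    have "adeg a ?q < adeg a p"
    proof -
      have "\<forall>j<length p. j \<notin> ?W \<longrightarrow> ?q ! j = p ! j" by (auto simp: nth_list_update)
      moreover have "\<forall>j\<in>?W. j < length p \<longrightarrow> ?q ! j \<noteq> a" using bc gk by (auto simp: nth_list_update)
      moreover obtain j0 where "j0 \<in> ?W" "p ! j0 = a" using h by auto
      ultimately show ?thesis using gk by (intro adeg_less[of ?q p ?W _ j0]) auto
    qed
    then have "facet_less n a ?q p" by (simp add: facet_less_def)
    moreover have "\<forall>t. b t + c t = ?x t + ?y t" using bc(3) by (simp add: vadd_def fun_eq_iff)
    ultimately show False using kill[of b c] bc by simp
  qed
  have "PM ?x ?y"
    unfolding PM_def
  proof (intro ballI impI notI)
    fix m assume mV: "m \<in> V n d" and mle: "\<forall>i. m i \<le> ?x i + ?y i" and ma: "m \<noteq> a"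
      and m'a: "(\<lambda>i. ?x i + ?y i - m i) \<noteq> a" and lt: "lexless n m ?x"
    let ?m' = "\<lambda>i. ?x i + ?y i - m i"
    have "sum ?m' {..<n} = sum (\<lambda>i. ?x i + ?y i) {..<n} - sum m {..<n}"
      by (rule sum_diff_nat) (use mle in auto)
    then have m'V: "?m' \<in> V n d" using xV yV mV by (auto simp: V_def vec_def sum.distrib)
    let ?q = "p[g := m, Suc g := ?m']"
    have o1: "\<forall>j<length p. j \<notin> ?W \<longrightarrow> ?q ! j = p ! j" by (auto simp: nth_list_update)
    have o2: "\<forall>j<length ?q. j \<notin> ?W \<longrightarrow> p ! j = ?q ! j" by (auto simp: nth_list_update)
    have w1: "\<forall>j\<in>?W. j < length p \<longrightarrow> p ! j \<noteq> a" using xya by auto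
    have w2: "\<forall>j\<in>?W. j < length ?q \<longrightarrow> ?q ! j \<noteq> a" using ma m'a gk by (auto simp: nth_list_update)
    have "adeg a p \<le> adeg a ?q" by (rule adeg_cmp(1)[OF _ o1 w1]) simp
    moreover have "adeg a ?q \<le> adeg a p" by (rule adeg_cmp(1)[OF _ o2 w2]) simp
    moreover have "seqless n ?q p"
      unfolding seqless_def using gk lt by (intro exI[of _ g]) (auto simp: nth_list_update)
    ultimately have "facet_less n a ?q p" by (simp add: facet_less_def)
    moreover have "\<forall>t. m t + ?m' t = ?x t + ?y t" using mle by (simp add: le_add_diff_inverse)
    ultimately show False using kill[of m ?m'] mV m'V by simp
  qed
  then show ?thesis using xya by simp
qed

end


context setting begin

lemma facet_facts:
  assumes gg: "sumset (V n d - {a}) (V n d - {a}) = V n (2 * d)"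
    and pc: "p \<in> chains n d lam" and hk: "Suc (Suc h) < length p"
    and fac: "is_facet (F_less_cap n d a lam p)
               (labelled_face p ({1..<length p} - {Suc h, Suc (Suc h)}))"
  shows "p ! h = cc \<and> PM (p ! h) (p ! Suc h) \<and> PM (p ! Suc h) (p ! Suc (Suc h))
      \<and> p ! Suc h \<in> V n d \<and> p ! Suc h \<noteq> a"
proof -
  let ?k = "length p"
  let ?x = "p ! h" and ?y = "p ! Suc h" and ?z = "p ! Suc (Suc h)"
  let ?D = "{Suc h, Suc (Suc h)}"
  have d0: "0 < d" using d2 by simp
  have sp: "set p \<subseteq> V n d" using pc by (auto simp: chains_def)
  have xV: "?x \<in> V n d" and yV: "?y \<in> V n d" and zV: "?z \<in> V n d"
    using sp hk by (auto dest: nth_mem)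
  have B1: "?x \<noteq> a \<and> ?y \<noteq> a \<and> PM ?x ?y"
    using pair_block[OF gg pc _ fac, of h "Suc (Suc h)"] hk by simp
  have B2: "?y \<noteq> a \<and> ?z \<noteq> a \<and> PM ?y ?z"
    using pair_block[OF gg pc _ fac, of "Suc h" "Suc h"] hk by simp
  have "labelled_face p ({1..<?k} - ?D) \<in> F_less_cap n d a lam p"
    using fac by (simp add: is_facet_def)
  then obtain q where qc: "q \<in> chains n d lam" and fl: "facet_less n a q p"
    and sub: "labelled_face p ({1..<?k} - ?D) \<subseteq> open_chain q"
    unfolding F_less_cap_def F_less_def by blast
  have len: "length q = ?k" using chain_len[OF pc qc d0] .
  have sq: "set q \<subseteq> V n d" using qc by (auto simp: chains_def)
  have agree: "node q j = node p j" if "j \<le> ?k" "j \<notin> ?D" for j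
  proof (cases "j = 0")
    case True then show ?thesis by (simp add: node_0)
  next
    case j0: False
    show ?thesis
    proof (cases "j = ?k")
      case True then show ?thesis using pc qc len by (simp add: chains_def)
    next
      case False
      then have "j \<in> {1..<?k} - ?D" using that j0 by auto
      then have "node p j \<in> open_chain q" using sub unfolding labelled_face_def by auto
      then obtain j' where j': "j' \<in> {1..<length q}" "node p j = node q j'"
        unfolding open_chain_def by auto
      then have "j' = j" using node_inj[OF sp sq d0, of j j'] that len by auto
      then show ?thesis using j' by simp
    qed
  qed
  let ?W = "{h, Suc h, Suc (Suc h)}"
  have links: "\<forall>m<?k. m \<notin> ?W \<longrightarrow> q ! m = p ! m"
  proof (intro allI impI)
    fix m assume "m < ?k" "m \<notin> ?W"
    then show "q ! m = p ! m" using agree[of m] agree[of "Suc m"] by (intro link_eq) auto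
  qed
  have win: "\<forall>t. (q ! h) t + (q ! Suc h) t + (q ! Suc (Suc h)) t = ?x t + ?y t + ?z t"
  proof
    fix t
    have "node q (h + 3) = node p (h + 3)" using agree[of "h+3"] hk by simp
    moreover have "node q h = node p h" using agree[of h] hk by simp
    ultimately show "(q ! h) t + (q ! Suc h) t + (q ! Suc (Suc h)) t = ?x t + ?y t + ?z t"
      using node_window[of q h t] node_window[of p h t] by (simp add: fun_eq_iff)
  qed
  have wa: "\<forall>j\<in>?W. j < ?k \<longrightarrow> p ! j \<noteq> a" using B1 B2 by auto
  have ad1: "adeg a p \<le> adeg a q" by (rule adeg_cmp(1)[OF len links wa])
  then have ad: "adeg a q = adeg a p" and sl: "seqless n q p"
    using fl by (auto simp: facet_less_def)
  have qwa: "\<forall>j\<in>?W. j < ?k \<longrightarrow> q ! j \<noteq> a" using adeg_cmp(2)[OF len links wa] ad by simp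
  obtain j0 where j0: "j0 < ?k" "\<forall>m<j0. q ! m = p ! m" "lexless n (q ! j0) (p ! j0)"
    using sl len unfolding seqless_def by auto
  have "j0 \<in> ?W"
  proof (rule ccontr)
    assume "j0 \<notin> ?W"
    then have "q ! j0 = p ! j0" using links j0 by simp
    then show False using j0 lex_irrefl by metis
  qed
  moreover have "j0 \<noteq> Suc (Suc h)"
  proof
    assume e: "j0 = Suc (Suc h)"
    then have "q ! h = ?x" "q ! Suc h = ?y" using j0 by auto
    then have "q ! j0 = ?z" using win e by (auto simp: fun_eq_iff)
    then show False using j0(3) e lex_irrefl by simp
  qed
  moreover have "j0 \<noteq> Suc h"
  proof
    assume e: "j0 = Suc h"
    then have qh: "q ! h = ?x" using j0 by auto
    let ?m = "q ! Suc h" and ?m' = "q ! Suc (Suc h)"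
    have mV: "?m \<in> V n d" and m'V: "?m' \<in> V n d" using sq len hk by (auto dest: nth_mem)
    have sm: "\<forall>t. ?m t + ?m' t = ?y t + ?z t" using win qh by (metis add.assoc add_left_cancel)
    have "(\<lambda>i. ?y i + ?z i - ?m i) = ?m'" using sm by (auto simp: fun_eq_iff) (metis add_diff_cancel_left')
    moreover have "?m \<noteq> a" "?m' \<noteq> a" using qwa hk by auto
    moreover have "\<forall>i. ?m i \<le> ?y i + ?z i" using sm by (metis le_add1)
    ultimately have "\<not> lexless n ?m ?y" using B2 mV unfolding PM_def by auto
    then show False using j0 e by simp
  qed
  ultimately have "j0 = h" by simp
  have m1V: "q ! h \<in> V n d" using sq len hk by (auto dest: nth_mem)
  have m1le: "\<forall>i. (q ! h) i \<le> ?x i + ?y i + ?z i"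
  proof
    fix i
    have "(q ! h) i \<le> (q ! h) i + (q ! Suc h) i + (q ! Suc (Suc h)) i" by simp
    then show "(q ! h) i \<le> ?x i + ?y i + ?z i" using win by simp
  qed
  have m1a: "q ! h \<noteq> a" using qwa hk by simp
  have "?x = cc"
    using core[OF xV yV zV _ _ _ _ m1V m1a m1le] B1 B2 j0 \<open>j0 = h\<close> by simp
  then show ?thesis using B1 B2 yV by simp
qed

end


theorem lemma3p6:
  fixes n d :: nat and a lam :: "nat \<Rightarrow> nat"
    and p :: "(nat \<Rightarrow> nat) list" and i :: nat
  assumes "n \<ge> 2" and "d \<ge> 2"
    and "a \<in> V n d"
    and "\<forall>i j. i \<le> j \<longrightarrow> j < n \<longrightarrow> a i \<le> a j"
    and "a \<noteq> (\<lambda>t. if t = n - 1 then d else 0)"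
    and "a \<noteq> (\<lambda>t. if t = n - 2 then 1 else if t = n - 1 then d - 1 else 0)"
    and "a \<noteq> (\<lambda>t. if t = n - 2 then 2 else if t = n - 1 then d - 2 else 0)"
    and "sumset (V n d - {a}) (V n d - {a}) = V n (2 * d)"
    and "lam \<in> gen_semigroup (V n d - {a})"
    and "p \<in> chains n d lam"
    and "adeg a p \<ge> 1"
    and "1 \<le> i" and "i + 1 < length p"
    and "is_facet (F_less_cap n d a lam p) (labelled_face p ({1..<length p} - {i, i + 1}))"
  shows "(i + 2 < length p \<longrightarrow>
           \<not> is_facet (F_less_cap n d a lam p) (labelled_face p ({1..<length p} - {i + 1, i + 2})))
       \<and> (i + 3 < length p \<longrightarrow>
           \<not> is_facet (F_less_cap n d a lam p) (labelled_face p ({1..<length p} - {i + 2, i + 3})))"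
proof -
  interpret setting n d a using assms(1-7) by unfold_locales
  obtain h where ih: "i = Suc h" using assms(12) by (cases i) auto
  have hk: "Suc (Suc h) < length p" using assms(13) ih by simp
  have fac0: "is_facet (F_less_cap n d a lam p)
               (labelled_face p ({1..<length p} - {Suc h, Suc (Suc h)}))"
    using assms(14) ih by simp
  note F0 = facet_facts[OF assms(8,10) hk fac0]
  show ?thesis
  proof (intro conjI impI notI)
    assume k2: "i + 2 < length p"
      and f2: "is_facet (F_less_cap n d a lam p) (labelled_face p ({1..<length p} - {i + 1, i + 2}))"
    have hk2: "Suc (Suc (Suc h)) < length p" using k2 ih by simp
    have fac2: "is_facet (F_less_cap n d a lam p)
               (labelled_face p ({1..<length p} - {Suc (Suc h), Suc (Suc (Suc h))}))"
      using f2 ih by (simp add: numeral_2_eq_2)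
    have "p ! Suc h = cc" using facet_facts[OF assms(8,10) hk2 fac2] by simp
    then show False using F0 PM_cc_cc by metis
  next
    assume k3: "i + 3 < length p"
      and f3: "is_facet (F_less_cap n d a lam p) (labelled_face p ({1..<length p} - {i + 2, i + 3}))"
    have hk3: "Suc (Suc (Suc (Suc h))) < length p" using k3 ih by simp
    have fac3: "is_facet (F_less_cap n d a lam p)
               (labelled_face p ({1..<length p} - {Suc (Suc (Suc h)), Suc (Suc (Suc (Suc h)))}))"
      using f3 ih by (simp add: numeral_2_eq_2 numeral_3_eq_3)
    have "p ! Suc (Suc h) = cc" using facet_facts[OF assms(8,10) hk3 fac3] by simp
    then show False using F0 PM_cc_mid[of "p ! Suc h"] by metis
  qed
qed

end
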